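(* If $\mu$ satisfies $\mathrm{IC}(1)$, then $\int e^{2\Lambda^*_{\overline{\mu}}(x/2)}\,d\mu(x)\int e^{-\Lambda^*_{\overline{\mu}}(x)}\,d\mu(x)\le 1$.
   Context: A pair $(\mu,W)$, with $\mu$ a probability measure on $\mathbb{R}^n$ and $W:\mathbb{R}^n\to[0,\infty]$, satisfies property $(\tau)$ if for every bounded function $f$, $\int e^{h}\,d\mu\int e^{-f}\,d\mu\le 1$, where $h(x)=\inf_{y}\{W(x-y)+f(y)\}$ is the infimum convolution of $W$ and $f$. For a measure $\mu$, $\mu'$ is its reflection through the origin, $\overline{\mu}=\mu*\mu'$, $\Lambda_\mu=\ln\int e^{\langle \cdot,y\rangle}d\mu(y)$, and $\Lambda^*_\mu(x)=\sup_y\{\langle x,y\rangle-\Lambda_\mu(y)\}$. A probability measure $\mu$ satisfies $\mathrm{IC}(\beta)$ ($\beta>0$) if the pair $(\mu,\Lambda^*_{\overline{\mu}}(\cdot/\beta))$ satisfies property $(\tau)$. *)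

theory Defs
  imports "HOL-Probability.Probability"
begin

definition ennexp :: "ereal \<Rightarrow> ennreal" where
  "ennexp t = (case t of ereal r \<Rightarrow> ennreal (exp r) | PInfty \<Rightarrow> \<infinity> | MInfty \<Rightarrow> 0)"

definition reflect_measure :: "'a::euclidean_space measure \<Rightarrow> 'a measure" where
  "reflect_measure M = distr M borel uminus"

definition conv_measure :: "'a::euclidean_space measure \<Rightarrow> 'a measure \<Rightarrow> 'a measure" where
  "conv_measure M N = distr (M \<Otimes>\<^sub>M N) borel (\<lambda>(x, y). x + y)"

definition symm_measure :: "'a::euclidean_space measure \<Rightarrow> 'a measure" where
  "symm_measure M = conv_measure M (reflect_measure M)"

definition log_laplace :: "'a::euclidean_space measure \<Rightarrow> 'a \<Rightarrow> ereal" where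
  "log_laplace M y =
     (let I = (\<integral>\<^sup>+ x. ennreal (exp (inner y x)) \<partial>M)
      in if I = \<infinity> then \<infinity> else ereal (ln (enn2real I)))"

definition cramer :: "'a::euclidean_space measure \<Rightarrow> 'a \<Rightarrow> ereal" where
  "cramer M x = (SUP y. ereal (inner x y) - log_laplace M y)"

definition inf_conv :: "('a::euclidean_space \<Rightarrow> ereal) \<Rightarrow> ('a \<Rightarrow> real) \<Rightarrow> 'a \<Rightarrow> ereal" where
  "inf_conv W f x = (INF y. W (x - y) + ereal (f y))"

definition property_tau :: "'a::euclidean_space measure \<Rightarrow> ('a \<Rightarrow> ereal) \<Rightarrow> bool" where
  "property_tau M W \<longleftrightarrow>
     (\<forall>f :: 'a \<Rightarrow> real. f \<in> borel_measurable borel \<longrightarrow> bounded (range f) \<longrightarrow>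
        (\<integral>\<^sup>+ x. ennexp (inf_conv W f x) \<partial>M) * (\<integral>\<^sup>+ x. ennreal (exp (- f x)) \<partial>M) \<le> 1)"

definition IC :: "real \<Rightarrow> 'a::euclidean_space measure \<Rightarrow> bool" where
  "IC \<beta> M \<longleftrightarrow> property_tau M (\<lambda>x. cramer (symm_measure M) (x /\<^sub>R \<beta>))"

end

theory Submission
  imports Defs
begin

lemma ennexp_mono: "a \<le> b \<Longrightarrow> ennexp a \<le> ennexp b"
  by (cases a; cases b) (auto simp: ennexp_def ennreal_leI)

lemma ennexp_ereal[simp]: "ennexp (ereal r) = ennreal (exp r)"
  by (simp add: ennexp_def)

lemma ennexp_alt: "ennexp t = (if t = \<infinity> then \<infinity> else if t = - \<infinity> then 0
     else ennreal (exp (real_of_ereal t)))"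
  by (cases t) (auto simp: ennexp_def)

lemma ennexp_measurable[measurable]: "ennexp \<in> borel_measurable borel"
  unfolding ennexp_alt[abs_def] by measurable

lemma ennexp_PInf: "ennexp \<infinity> = top" by (simp add: ennexp_def)

lemma symm_prob:
  fixes \<mu> :: "'a::euclidean_space measure"
  assumes "prob_space \<mu>" and "sets \<mu> = sets borel"
  shows "prob_space (symm_measure \<mu>)"
proof -
  have m: "uminus \<in> \<mu> \<rightarrow>\<^sub>M (borel :: 'a measure)"
    using assms(2) by (simp add: measurable_cong_sets[OF assms(2) refl])
  have p1: "prob_space (reflect_measure \<mu>)"
    unfolding reflect_measure_def using prob_space.prob_space_distr[OF assms(1) m] .
  have p2: "prob_space (\<mu> \<Otimes>\<^sub>M reflect_measure \<mu>)"
    by (rule prob_space_pair[OF assms(1) p1])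
  have "sets (reflect_measure \<mu>) = sets borel" by (simp add: reflect_measure_def)
  then have m2: "(\<lambda>(x, y). x + y) \<in> (\<mu> \<Otimes>\<^sub>M reflect_measure \<mu>) \<rightarrow>\<^sub>M (borel :: 'a measure)"
    using assms(2) by (simp add: measurable_cong_sets[OF sets_pair_measure_cong[OF assms(2)] refl]
       cong: sets_pair_measure_cong)
  show ?thesis unfolding symm_measure_def conv_measure_def
    using prob_space.prob_space_distr[OF p2 m2] .
qed

lemma log_laplace_zero:
  assumes "prob_space M" shows "log_laplace M 0 = 0"
proof -
  have "(\<integral>\<^sup>+ x. ennreal (exp (inner 0 x)) \<partial>M) = 1"
    using assms by (simp add: prob_space.emeasure_space_1)
  then show ?thesis by (simp add: log_laplace_def)
qed

lemma cramer_nonneg: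
  assumes "prob_space M" shows "0 \<le> cramer M x"
proof -
  have "ereal (inner x 0) - log_laplace M 0 \<le> cramer M x"
    unfolding cramer_def by (rule SUP_upper) auto
  then show ?thesis using log_laplace_zero[OF assms] by (simp add: zero_ereal_def)
qed

lemma half_le: fixes t S :: ereal assumes "2 * t \<le> S" shows "t \<le> S / 2"
  using assms by (cases t; cases S) auto

lemma two_half: fixes S :: ereal shows "2 * (S / 2) = S"
  by (cases S) auto

lemma cramer_convex:
  "2 * cramer M (x /\<^sub>R 2) \<le> cramer M (x - y) + cramer M y"
proof -
  let ?S = "cramer M (x - y) + cramer M y"
  have t: "2 * (ereal (inner (x /\<^sub>R 2) z) - log_laplace M z) \<le> ?S" for z
  proof (cases "log_laplace M z")
    case (real l)
    have a: "ereal (inner (x - y) z) - log_laplace M z \<le> cramer M (x - y)"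
      unfolding cramer_def by (rule SUP_upper) auto
    have b: "ereal (inner y z) - log_laplace M z \<le> cramer M y"
      unfolding cramer_def by (rule SUP_upper) auto
    have "2 * (ereal (inner (x /\<^sub>R 2) z) - log_laplace M z)
        = (ereal (inner (x - y) z) - log_laplace M z) + (ereal (inner y z) - log_laplace M z)"
      using real by (simp add: inner_diff_left)
    also have "\<dots> \<le> ?S" by (rule add_mono[OF a b])
    finally show ?thesis .
  next
    case PInf then show ?thesis by simp
  next
    case MInf
    have "log_laplace M z \<noteq> - \<infinity>"
      by (simp add: log_laplace_def Let_def)
    then show ?thesis using MInf by simp
  qed
  have "cramer M (x /\<^sub>R 2) \<le> ?S / 2"
    unfolding cramer_def[of M "x /\<^sub>R 2"]
  proof (rule SUP_least)
    fix z
    show "ereal (inner (x /\<^sub>R 2) z) - log_laplace M z \<le> ?S / 2"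
      using t[of z] by (rule half_le)
  qed
  then have "2 * cramer M (x /\<^sub>R 2) \<le> 2 * (?S / 2)"
    by (intro ereal_mult_left_mono) auto
  also have "2 * (?S / 2) = ?S" by (rule two_half)
  finally show ?thesis .
qed


lemma cramer_meas[measurable]: "cramer M \<in> borel_measurable borel"
proof (rule borel_measurableI_greater)
  fix c :: ereal
  have eq: "{x \<in> space borel. c < cramer M x} =
      (\<Union>y. {x. c < ereal (inner x y) - log_laplace M y})"
    by (auto simp: cramer_def less_SUP_iff)
  have "open {x. c < ereal (inner x y) - log_laplace M y}" for y
  proof (cases "log_laplace M y")
    case (real l)
    have "{x. c < ereal (inner x y) - log_laplace M y} = {x. c < ereal (inner x y - l)}"
      using real by simp
    also have "open \<dots>"
      by (rule open_Collect_less) (intro continuous_intros)+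
    finally show ?thesis .
  next
    case PInf then show ?thesis by simp
  next
    case MInf then show ?thesis by (cases "c < \<infinity>") auto
  qed
  then show "{x \<in> space borel. c < cramer M x} \<in> sets borel"
    unfolding eq by (intro borel_open open_UN) auto
qed

lemma sup_ennexp: "(SUP n::nat. ennexp (min a (ereal (real n)))) = ennexp a"
proof (rule antisym)
  show "(SUP n::nat. ennexp (min a (ereal (real n)))) \<le> ennexp a"
    by (rule SUP_least) (intro ennexp_mono, simp)
next
  show "ennexp a \<le> (SUP n::nat. ennexp (min a (ereal (real n))))"
  proof (cases a)
    case (real r)
    obtain n :: nat where "r \<le> real n" using real_arch_simple by blast
    then have "min a (ereal (real n)) = a" using real by simp
    then show ?thesis by (metis SUP_upper UNIV_I)
  next
    case PInf
    have "(top::ennreal) = (SUP n::nat. of_nat n)" by (simp add: ennreal_SUP_of_nat_eq_top)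
    also have "\<dots> \<le> (SUP n::nat. ennexp (min a (ereal (real n))))"
    proof (rule SUP_mono)
      fix n :: nat
      have "real n \<le> exp (real n)"
        using exp_ge_add_one_self[of "real n"] by linarith
      then have "of_nat n \<le> ennexp (min a (ereal (real n)))"
        using PInf by (simp add: ennreal_of_nat_eq_real_of_nat ennreal_leI)
      then show "\<exists>m\<in>UNIV. of_nat n \<le> ennexp (min a (ereal (real m)))" by blast
    qed
    finally have "top \<le> (SUP n::nat. ennexp (min a (ereal (real n))))" .
    then show ?thesis using PInf by (metis ennexp_PInf)
  next
    case MInf then show ?thesis by (simp add: ennexp_def)
  qed
qed

theorem lemma2:
  fixes \<mu> :: "'a::euclidean_space measure"
  assumes "prob_space \<mu>" and "sets \<mu> = sets borel"
    and "IC 1 \<mu>"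
  shows "(\<integral>\<^sup>+ x. ennexp (2 * cramer (symm_measure \<mu>) (x /\<^sub>R 2)) \<partial>\<mu>)
           * (\<integral>\<^sup>+ x. ennexp (- cramer (symm_measure \<mu>) x) \<partial>\<mu>) \<le> 1"
proof -
  define W where "W = cramer (symm_measure \<mu>)"
  have P: "property_tau \<mu> W" using assms(3) by (simp add: IC_def W_def)
  have Wnn: "0 \<le> W x" for x
    unfolding W_def by (rule cramer_nonneg[OF symm_prob[OF assms(1,2)]])
  have Wm[measurable]: "W \<in> borel_measurable borel" unfolding W_def by measurable
  have mc: "measurable \<mu> N = measurable borel N" for N :: "'b measure"
    by (rule measurable_cong_sets[OF assms(2) refl])
  define f where "f n x = real_of_ereal (min (W x) (ereal (real n)))" for n :: nat and x
  have fe: "ereal (f n x) = min (W x) (ereal (real n))" for n x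
    using Wnn[of x] unfolding f_def by (cases "W x") (auto simp: min_def)
  have fmeas: "f n \<in> borel_measurable borel" for n
    unfolding f_def by measurable
  have fbd: "bounded (range (f n))" for n
  proof -
    have "\<bar>f n x\<bar> \<le> real n" for x
    proof -
      have "0 \<le> ereal (f n x)" "ereal (f n x) \<le> ereal (real n)" using fe[of n x] Wnn[of x] by auto
      then show ?thesis by simp
    qed
    then show ?thesis unfolding bounded_iff by auto
  qed
  define A where "A n = (\<integral>\<^sup>+ x. ennexp (min (2 * W (x /\<^sub>R 2)) (ereal (real n))) \<partial>\<mu>)" for n :: nat
  define B where "B = (\<integral>\<^sup>+ x. ennexp (- W x) \<partial>\<mu>)"
  have key: "A n * B \<le> 1" for n
  proof -
    have t: "(\<integral>\<^sup>+ x. ennexp (inf_conv W (f n) x) \<partial>\<mu>) * (\<integral>\<^sup>+ x. ennreal (exp (- f n x)) \<partial>\<mu>) \<le> 1"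
      using P fmeas[of n] fbd[of n] unfolding property_tau_def by blast
    have pw: "min (2 * W (x /\<^sub>R 2)) (ereal (real n)) \<le> inf_conv W (f n) x" for x
      unfolding inf_conv_def
    proof (rule INF_greatest)
      fix y
      show "min (2 * W (x /\<^sub>R 2)) (ereal (real n)) \<le> W (x - y) + ereal (f n y)"
      proof (cases "W y \<le> ereal (real n)")
        case True
        then have "ereal (f n y) = W y" using fe[of n y] by simp
        then show ?thesis using cramer_convex[of "symm_measure \<mu>" x y] unfolding W_def
          by (simp add: min.coboundedI1)
      next
        case False
        then have "ereal (f n y) = ereal (real n)" using fe[of n y] by simp
        moreover have "ereal (real n) \<le> W (x - y) + ereal (real n)"
          using Wnn[of "x - y"] by (simp add: add_increasing)
        ultimately show ?thesis by (simp add: min.coboundedI2)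
      qed
    qed
    have "A n \<le> (\<integral>\<^sup>+ x. ennexp (inf_conv W (f n) x) \<partial>\<mu>)"
      unfolding A_def by (intro nn_integral_mono ennexp_mono pw)
    moreover have "B \<le> (\<integral>\<^sup>+ x. ennreal (exp (- f n x)) \<partial>\<mu>)"
      unfolding B_def
    proof (intro nn_integral_mono)
      fix x
      have "ereal (f n x) \<le> W x" using fe[of n x] by simp
      then have "- W x \<le> ereal (- f n x)"
        by (metis ereal_minus_le_minus uminus_ereal.simps(1))
      then show "ennexp (- W x) \<le> ennreal (exp (- f n x))"
        using ennexp_mono by fastforce
    qed
    ultimately have "A n * B \<le> (\<integral>\<^sup>+ x. ennexp (inf_conv W (f n) x) \<partial>\<mu>) * (\<integral>\<^sup>+ x. ennreal (exp (- f n x)) \<partial>\<mu>)"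
      by (intro mult_mono) auto
    with t show ?thesis by simp
  qed
  have inc: "incseq (\<lambda>n x. ennexp (min (2 * W (x /\<^sub>R 2)) (ereal (real n))))"
    by (auto simp: incseq_def le_fun_def intro!: ennexp_mono min.mono)
  have meas: "(\<lambda>x. ennexp (min (2 * W (x /\<^sub>R 2)) (ereal (real n)))) \<in> borel_measurable \<mu>" for n
    unfolding mc by measurable
  have "(\<integral>\<^sup>+ x. ennexp (2 * W (x /\<^sub>R 2)) \<partial>\<mu>) = (\<integral>\<^sup>+ x. (SUP n. ennexp (min (2 * W (x /\<^sub>R 2)) (ereal (real n)))) \<partial>\<mu>)"
    by (simp add: sup_ennexp)
  also have "\<dots> = (SUP n. A n)"
    unfolding A_def by (rule nn_integral_monotone_convergence_SUP[OF inc meas])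
  finally have AS: "(\<integral>\<^sup>+ x. ennexp (2 * W (x /\<^sub>R 2)) \<partial>\<mu>) = (SUP n. A n)" .
  have "(SUP n. A n) * B = (SUP n. A n * B)" by (rule SUP_mult_right_ennreal)
  also have "\<dots> \<le> 1" by (rule SUP_least) (rule key)
  finally show ?thesis using AS unfolding B_def W_def by simp
qed

end
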